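(* Let $n\ge 2$ and $q=p_n$. Then for $X=F_n(q)$ the matrix $X^TX$ is invertible and the log-prime estimator satisfies $\ln\hat q=(X^TX)^{-1}X^T\ln z_n=\ln p_n$.
   Context: $z_n=(1,\dots,n)^T$; $p_n$ is the vector of all primes $\le n$ in increasing order; logarithms of vectors are entry-wise. For $1\le i\le n$, $e_{\bar i|n}\in\mathbb{R}^n$ has $k$-th entry $1$ if $i\mid k$, else $0$. For $2\le i\le n$, $f_{i|n}=\sum_{t=1}^{\lfloor \log_i n\rfloor} e_{\overline{i^t}|n}$. For $q=(q_1,\dots,q_m)^T$ with distinct entries in $\{2,\dots,n\}$, $F_n(q)=[f_{q_1|n}\ \cdots\ f_{q_m|n}]\in\mathbb{R}^{n\times m}$. *)

theory Defs
  imports Complex_Main "HOL-Computational_Algebra.Primes" "Jordan_Normal_Form.Matrix"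
begin

(* Vectors in R^n are 'real vec' of dimension n; entry k (1-based) is stored at index k-1. *)

definition z_vec :: "nat \<Rightarrow> real vec" where
  "z_vec n = vec n (\<lambda>k. real (k + 1))"

definition primes_upto :: "nat \<Rightarrow> nat list" where
  "primes_upto n = filter prime [0..<n+1]"

definition p_vec :: "nat \<Rightarrow> real vec" where
  "p_vec n = vec (length (primes_upto n)) (\<lambda>j. real (primes_upto n ! j))"

definition log_vec :: "real vec \<Rightarrow> real vec" where
  "log_vec v = map_vec ln v"

definition e_bar :: "nat \<Rightarrow> nat \<Rightarrow> real vec" where
  "e_bar i n = vec n (\<lambda>k. if i dvd (k + 1) then 1 else 0)"

definition f_vec :: "nat \<Rightarrow> nat \<Rightarrow> real vec" where
  "f_vec i n = vec n (\<lambda>k. \<Sum>t = 1..nat \<lfloor>log (real i) (real n)\<rfloor>. e_bar (i ^ t) n $ k)"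

definition F_mat :: "nat \<Rightarrow> nat list \<Rightarrow> real mat" where
  "F_mat n q = mat n (length q) (\<lambda>(k, j). f_vec (q ! j) n $ k)"

end

theory Submission imports Defs "Jordan_Normal_Form.Determinant" begin

lemma mult_le_L:
  fixes p k n :: nat
  assumes p: "prime p" and k: "1 \<le> k" "k \<le> n"
  shows "multiplicity p k \<le> nat \<lfloor>log (real p) (real n)\<rfloor>"
proof -
  let ?m = "multiplicity p k"
  have "p ^ ?m dvd k" by (rule multiplicity_dvd)
  hence "p ^ ?m \<le> k" using k by (intro dvd_imp_le) auto
  hence "real p ^ ?m \<le> real n" using k by (metis of_nat_le_iff of_nat_power order.trans)
  hence "real p powr real ?m \<le> real n" using prime_gt_0_nat[OF p]
    by (simp add: powr_realpow)
  hence "real ?m \<le> log (real p) (real n)"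
    using le_log_iff[of "real p" "real n" "real ?m"] prime_gt_1_nat[OF p] k by auto
  hence "int ?m \<le> \<lfloor>log (real p) (real n)\<rfloor>" by (simp add: le_floor_iff)
  thus ?thesis by linarith
qed

lemma sum_count:
  fixes p k n :: nat
  assumes p: "prime p" and k: "1 \<le> k" "k \<le> n"
  shows "(\<Sum>t = 1..nat \<lfloor>log (real p) (real n)\<rfloor>. (if p ^ t dvd k then 1 else 0 :: real))
         = real (multiplicity p k)"
proof -
  let ?L = "nat \<lfloor>log (real p) (real n)\<rfloor>"
  have "(\<Sum>t = 1..?L. (if p ^ t dvd k then 1 else 0 :: real)) = real (card {t\<in>{1..?L}. p ^ t dvd k})"
    by (simp add: sum.If_cases Int_def conj_commute)
  also have "{t\<in>{1..?L}. p ^ t dvd k} = {1..multiplicity p k}"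
  proof -
    have "p \<noteq> 1" using p by auto
    hence iff: "\<And>t. p ^ t dvd k \<longleftrightarrow> t \<le> multiplicity p k"
      using power_dvd_iff_le_multiplicity[of k p] k by auto
    show ?thesis
    proof (rule equalityI; rule subsetI)
      fix t assume "t \<in> {t\<in>{1..nat \<lfloor>log (real p) (real n)\<rfloor>}. p ^ t dvd k}"
      thus "t \<in> {1..multiplicity p k}" using iff[of t] by simp
    next
      fix t assume "t \<in> {1..multiplicity p k}"
      thus "t \<in> {t\<in>{1..nat \<lfloor>log (real p) (real n)\<rfloor>}. p ^ t dvd k}"
        using iff[of t] mult_le_L[OF p k] by simp
    qed
  qed
  finally show ?thesis by simp
qed

lemma ln_sum_mult:
  fixes k n :: nat
  assumes k: "1 \<le> k" "k \<le> n"
  shows "ln (real k) = (\<Sum>p\<in>{p. prime p \<and> p \<le> n}. real (multiplicity p k) * ln (real p))"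
proof -
  have "real k = real (\<Prod>p\<in>prime_factors k. p ^ multiplicity p k)"
    using prod_prime_factors[of k] k by simp
  also have "\<dots> = (\<Prod>p\<in>prime_factors k. real p ^ multiplicity p k)" by simp
  finally have "ln (real k) = ln (\<Prod>p\<in>prime_factors k. real p ^ multiplicity p k)" by simp
  also have "\<dots> = (\<Sum>p\<in>prime_factors k. ln (real p ^ multiplicity p k))"
    by (rule ln_prod) (auto simp: in_prime_factors_iff prime_gt_0_nat)
  also have "\<dots> = (\<Sum>p\<in>prime_factors k. real (multiplicity p k) * ln (real p))"
    by (intro sum.cong refl) (simp add: ln_realpow in_prime_factors_iff prime_gt_0_nat)
  also have "\<dots> = (\<Sum>p\<in>{p. prime p \<and> p \<le> n}. real (multiplicity p k) * ln (real p))"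
  proof (rule sum.mono_neutral_left)
    show "finite {p. prime p \<and> p \<le> n}" by simp
    show "prime_factors k \<subseteq> {p. prime p \<and> p \<le> n}"
    proof
      fix x assume "x \<in> prime_factors k"
      hence "prime x" "x dvd k" by (auto simp: in_prime_factors_iff)
      moreover have "x \<le> k" using \<open>x dvd k\<close> k by (intro dvd_imp_le) auto
      ultimately show "x \<in> {p. prime p \<and> p \<le> n}" using k by auto
    qed
    show "\<forall>i\<in>{p. prime p \<and> p \<le> n} - prime_factors k. real (multiplicity i k) * ln (real i) = 0"
      using k by (auto simp: in_prime_factors_iff not_dvd_imp_multiplicity_0)
  qed
  finally show ?thesis .
qed

theorem theorem3p2:
  fixes n :: nat
  assumes "n \<ge> 2"
  defines "q \<equiv> primes_upto n"
  defines "X \<equiv> F_mat n q"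
  shows "invertible_mat (transpose_mat X * X) \<and>
         (\<forall>B \<in> carrier_mat (length q) (length q).
            inverts_mat B (transpose_mat X * X) \<and> inverts_mat (transpose_mat X * X) B \<longrightarrow>
            B *\<^sub>v (transpose_mat X *\<^sub>v log_vec (z_vec n)) = log_vec (p_vec n))"
proof -
  define m where "m = length q"
  define A where "A = transpose_mat X * X"
  define lp where "lp = log_vec (p_vec n)"
  define lz where "lz = log_vec (z_vec n)"
  have dq: "distinct q" unfolding q_def primes_upto_def by simp
  have sq: "set q = {p. prime p \<and> p \<le> n}" unfolding q_def primes_upto_def by (auto simp: less_Suc_eq_le) (metis le_neq_implies_less)
  have qj: "prime (q!j) \<and> 1 \<le> q!j \<and> q!j \<le> n" if "j < m" for j
  proof -
    have "q!j \<in> set q" using that m_def by simp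
    thus ?thesis using sq prime_gt_0_nat[of "q!j"] by auto
  qed
  have X: "X \<in> carrier_mat n m" unfolding X_def F_mat_def m_def by simp
  have AC: "A \<in> carrier_mat m m" unfolding A_def using X by simp
  have Xe: "X $$ (k, j) = real (multiplicity (q!j) (k+1))" if "k < n" "j < m" for k j
  proof -
    have "X $$ (k, j) = (\<Sum>t = 1..nat \<lfloor>log (real (q!j)) (real n)\<rfloor>. (if (q!j) ^ t dvd (k+1) then 1 else 0 :: real))"
      using that unfolding X_def F_mat_def f_vec_def e_bar_def m_def by simp
    also have "\<dots> = real (multiplicity (q!j) (k+1))"
      using sum_count[of "q!j" "k+1" n] qj[OF that(2)] that(1) by simp
    finally show ?thesis .
  qed
  have lpC: "lp \<in> carrier_vec m" unfolding lp_def log_vec_def p_vec_def m_def q_def by simp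
  have lpe: "lp $ j = ln (real (q!j))" if "j < m" for j
    using that unfolding lp_def log_vec_def p_vec_def m_def q_def by simp
  have lzC: "lz \<in> carrier_vec n" unfolding lz_def log_vec_def z_vec_def by simp
  have lze: "lz $ k = ln (real (k+1))" if "k < n" for k
    using that unfolding lz_def log_vec_def z_vec_def by simp
  have K: "X *\<^sub>v lp = lz"
  proof (rule eq_vecI)
    show "dim_vec (X *\<^sub>v lp) = dim_vec lz" using X lzC by simp
    fix k assume "k < dim_vec lz"
    hence k: "k < n" using lzC by simp
    have "(X *\<^sub>v lp) $ k = (\<Sum>j\<in>{0..<m}. X $$ (k, j) * lp $ j)"
      using X lpC k by (simp add: scalar_prod_def)
    also have "\<dots> = (\<Sum>j\<in>{..<m}. (\<lambda>p. real (multiplicity p (k+1)) * ln (real p)) (q!j))"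
      using Xe[OF k] lpe by (intro sum.cong) auto
    also have "\<dots> = (\<Sum>p\<in>set q. real (multiplicity p (k+1)) * ln (real p))"
      by (rule sum.reindex_bij_betw[OF bij_betw_nth[OF dq]]) (auto simp: m_def)
    also have "\<dots> = ln (real (k+1))" using ln_sum_mult[of "k+1" n] k sq by simp
    finally show "(X *\<^sub>v lp) $ k = lz $ k" using lze[OF k] by simp
  qed
  have R: "X $$ (q!j - 1, j') = (if j' = j then 1 else 0)" if "j < m" "j' < m" for j j'
  proof -
    have h: "q!j - 1 < n" "q!j - 1 + 1 = q!j" using qj[OF that(1)] by auto
    have "X $$ (q!j - 1, j') = real (multiplicity (q!j') (q!j))"
      using Xe[OF h(1) that(2)] unfolding h(2) .
    also have "\<dots> = (if j' = j then 1 else 0)"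
    proof (cases "j' = j")
      case True thus ?thesis using qj[OF that(1)] by (simp add: multiplicity_prime)
    next
      case False
      hence "q!j' \<noteq> q!j" using dq that nth_eq_iff_index_eq m_def by metis
      thus ?thesis using False qj that by (simp add: prime_multiplicity_other)
    qed
    finally show ?thesis .
  qed
  have ker: "v = 0\<^sub>v m" if vC: "v \<in> carrier_vec m" and Av: "A *\<^sub>v v = 0\<^sub>v m" for v
  proof -
    define w where "w = X *\<^sub>v v"
    have wC: "w \<in> carrier_vec n" unfolding w_def using mult_mat_vec_carrier[OF X vC] .
    have "transpose_mat X *\<^sub>v w = 0\<^sub>v m" using Av X vC unfolding A_def w_def
      by (simp add: assoc_mult_mat_vec[of "transpose_mat X" m n X m])
    hence "w \<bullet> w = 0"
      using transpose_vec_mult_scalar[OF X vC wC] vC unfolding w_def by simp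
    hence "(\<Sum>i\<in>{0..<n}. w $ i * w $ i) = 0" using wC by (simp add: scalar_prod_def)
    hence w0: "w $ i = 0" if "i < n" for i
      using sum_nonneg_eq_0_iff[of "{0..<n}" "\<lambda>i. w $ i * w $ i"] that by simp
    show ?thesis
    proof (rule eq_vecI)
      show "dim_vec v = dim_vec (0\<^sub>v m)" using vC by simp
      fix j assume "j < dim_vec (0\<^sub>v m)"
      hence j: "j < m" by simp
      have i: "q!j - 1 < n" using qj[OF j] by auto
      have "w $ (q!j - 1) = (\<Sum>j'\<in>{0..<m}. X $$ (q!j - 1, j') * v $ j')"
        unfolding w_def using X vC i by (simp add: scalar_prod_def)
      also have "\<dots> = (\<Sum>j'\<in>{0..<m}. (if j' = j then v $ j' else 0))"
        using R[OF j] by (intro sum.cong) auto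
      also have "\<dots> = v $ j" using j by simp
      finally show "v $ j = 0\<^sub>v m $ j" using w0[OF i] j by simp
    qed
  qed
  have "det A \<noteq> 0" using ker det_0_iff_vec_prod_zero[OF AC] by blast
  from det_non_zero_imp_unit[OF AC this, of "()"]
  obtain B0 where B0: "B0 \<in> carrier_mat m m" "B0 * A = 1\<^sub>m m" "A * B0 = 1\<^sub>m m"
    unfolding Units_def ring_mat_def by auto
  have inv: "invertible_mat A"
    unfolding invertible_mat_def inverts_mat_def using AC B0 by (auto intro!: exI[of _ B0])
  have part2: "B *\<^sub>v (transpose_mat X *\<^sub>v lz) = lp"
    if BC: "B \<in> carrier_mat m m" and BA: "inverts_mat B A" for B
  proof -
    have "transpose_mat X *\<^sub>v lz = A *\<^sub>v lp"
      unfolding A_def K[symmetric] using X lpC by (simp add: assoc_mult_mat_vec[of "transpose_mat X" m n X m])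
    hence "B *\<^sub>v (transpose_mat X *\<^sub>v lz) = (B * A) *\<^sub>v lp"
      using BC AC lpC by simp
    also have "B * A = 1\<^sub>m m" using BA BC unfolding inverts_mat_def by simp
    finally show ?thesis using lpC by simp
  qed
  show ?thesis using inv part2 unfolding A_def lp_def lz_def m_def by blast
qed
end
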